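(* Let $S\subseteq M_n$ be a noncommutative graph. Then $\mathcal{H}(S)$ equals the minimum $k$ such that there exist $m\in\mathbb{N}$ and matrices $E_1,\dots,E_m,F_1,\dots,F_m\in M_{k\times n}$ with $\sum_{i=1}^m F_i^\dagger E_i=I_n$ (equivalently, the linear map $\Psi:M_n\to M_k$, $\Psi(X)=\sum_{i=1}^m E_iXF_i^\dagger$, is trace-preserving) and $T_\Psi:=\mathrm{span}\{F_i^\dagger E_j:\ i,j\in[m]\}\subseteq S$.
   Context: All scalars are complex; $M_{k\times n}$ denotes complex $k\times n$ matrices and $M_n=M_{n\times n}$. A noncommutative graph is a linear subspace $S\subseteq M_n$ that contains $I_n$ and is closed under conjugate transpose. For a subspace $S\subseteq M_n$, $M_m(S)$ denotes the set of $m\times m$ block matrices $B=[B_{i,j}]_{i,j\in[m]}$ with every block $B_{i,j}\in S$, viewed as elements of $M_{mn}$. The Haemers bound is $\mathcal{H}(S)=\min\{\mathrm{rk}(B):\ m\in\mathbb{N},\ B\in M_m(S),\ \sum_{i=1}^m B_{i,i}=I_n\}$. Every trace-preserving linear map $M_n\to M_k$ can be written as $X\mapsto\sum_i E_iXF_i^\dagger$ with $\sum_i F_i^\dagger E_i=I_n$. *)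

theory Defs
  imports "Jordan_Normal_Form.Schur_Decomposition" "Jordan_Normal_Form.DL_Rank"
begin

definition msum :: "nat \<Rightarrow> nat \<Rightarrow> (nat \<Rightarrow> complex mat) \<Rightarrow> nat \<Rightarrow> complex mat" where
  "msum r c f m = mat r c (\<lambda>ij. \<Sum>i<m. f i $$ ij)"

definition mat_span :: "nat \<Rightarrow> complex mat set \<Rightarrow> complex mat set" where
  "mat_span n A = {X. \<exists>N (c :: nat \<Rightarrow> complex) M. (\<forall>j<N. M j \<in> A) \<and>
       X = mat n n (\<lambda>ab. \<Sum>j<N. c j * M j $$ ab)}"

definition nc_graph :: "nat \<Rightarrow> complex mat set \<Rightarrow> bool" where
  "nc_graph n S \<longleftrightarrow> S \<subseteq> carrier_mat n n \<and> 0\<^sub>m n n \<in> S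
     \<and> (\<forall>X\<in>S. \<forall>Y\<in>S. X + Y \<in> S) \<and> (\<forall>a. \<forall>X\<in>S. a \<cdot>\<^sub>m X \<in> S)
     \<and> 1\<^sub>m n \<in> S \<and> (\<forall>X\<in>S. mat_adjoint X \<in> S)"

definition blk :: "nat \<Rightarrow> complex mat \<Rightarrow> nat \<Rightarrow> nat \<Rightarrow> complex mat" where
  "blk n B i j = mat n n (\<lambda>(a,b). B $$ (i*n+a, j*n+b))"

definition haemers :: "nat \<Rightarrow> complex mat set \<Rightarrow> nat" where
  "haemers n S = (LEAST r. \<exists>m B. B \<in> carrier_mat (m*n) (m*n)
       \<and> (\<forall>i<m. \<forall>j<m. blk n B i j \<in> S)
       \<and> msum n n (\<lambda>i. blk n B i i) m = 1\<^sub>m n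
       \<and> vec_space.rank (m*n) B = r)"

end

theory Submission
  imports Defs
begin


lemma adj_dim[simp]: "dim_row (mat_adjoint A) = dim_col A" "dim_col (mat_adjoint A) = dim_row A"
  unfolding mat_adjoint_def by auto

lemma adj_index[simp]: "i < dim_col A \<Longrightarrow> j < dim_row A \<Longrightarrow> mat_adjoint A $$ (i,j) = conjugate (A $$ (j,i))"
  unfolding mat_adjoint_def by (auto simp: mat_of_rows_def)

lemma (in vec_space) rank_le_span_cols:
  assumes A: "A \<in> carrier_mat n nc" and C: "C \<in> carrier_mat n k"
    and sub: "set (cols A) \<subseteq> span (set (cols C))"
  shows "rank A \<le> rank C"
proof -
  have Cc: "set (cols C) \<subseteq> carrier_vec n" using C cols_dim by blast
  have vs: "vectorspace class_ring (vs (span (set (cols C))))"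
    using span_is_subspace[THEN subspace_is_vs, OF Cc] by auto
  have sm: "submodule class_ring (span (set (cols C))) V" using Cc by (simp add: span_is_submodule)
  have sub2: "VectorSpace.subspace class_ring (span (set (cols A))) (vs (span (set (cols C))))"
    using vectorspace.span_is_subspace[OF vs, of "set (cols A)", unfolded
    span_li_not_depend(1)[OF sub sm]] sub by auto
  have fin_dim:"vectorspace.fin_dim class_ring (vs (span (set (cols C))))"
       "vectorspace.fin_dim class_ring (vs (span (set (cols C)))\<lparr>carrier := span (set (cols A))\<rparr>)"
    using fin_dim_span_cols A C by auto
  show ?thesis unfolding rank_def using vectorspace.subspace_dim[OF vs sub2 fin_dim(1) fin_dim(2)] by simp
qed

lemma (in vec_space) rank_mult_le:
  assumes U: "U \<in> carrier_mat n k" and W: "W \<in> carrier_mat k nc"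
  shows "rank (U * W) \<le> k"
proof -
  have Uc: "set (cols U) \<subseteq> carrier_vec n" using U cols_dim by blast
  have "set (cols (U * W)) \<subseteq> span (set (cols U))"
  proof
    fix x assume "x \<in> set (cols (U * W))"
    then obtain q where q: "q < nc" "x = col (U * W) q" using U W
      by (metis cols_length cols_nth in_set_conv_nth carrier_matD index_mult_mat(3))
    have "x = U *\<^sub>v col W q" unfolding q(2) by (rule col_mult2[OF U W q(1)])
    also have "\<dots> = mat_of_cols n (cols U) *\<^sub>v vec (length (cols U)) (\<lambda>i. col W q $ i)"
    proof -
      have "vec (length (cols U)) (\<lambda>i. col W q $ i) = col W q" using U W q by (intro eq_vecI) auto
      then show ?thesis using U mat_of_cols_cols[of U] by simp
    qed
    also have "\<dots> = lincomb_list (\<lambda>i. col W q $ i) (cols U)"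
      by (rule lincomb_list_as_mat_mult[symmetric], insert Uc U, auto)
    also have "\<dots> \<in> span_list (cols U)" by (auto simp: span_list_def)
    finally show "x \<in> span (set (cols U))" using span_list_as_span[OF Uc] by auto
  qed
  then have "rank (U * W) \<le> rank U" using rank_le_span_cols[OF mult_carrier_mat[OF U W] U] by blast
  also have "\<dots> \<le> k" using rank_le_nc[OF U] .
  finally show ?thesis .
qed

lemma (in vec_space) rank_factor:
  assumes B: "B \<in> carrier_mat n nc"
  shows "\<exists>U W. U \<in> carrier_mat n (rank B) \<and> W \<in> carrier_mat (rank B) nc \<and> B = U * W"
proof -
  obtain S where max: "maximal S (\<lambda>T. T \<subseteq> set (cols B) \<and> lin_indpt T)"
    using maximal_exists[of "(\<lambda>T. T \<subseteq> set (cols B) \<and> lin_indpt T)" "card (set (cols B))" "{}"]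
    by (meson List.finite_set card_mono empty_iff empty_subsetI finite_lin_indpt2 rev_finite_subset)
  have rk: "rank B = card S" using rank_card_indpt[OF B max] .
  have SB: "S \<subseteq> set (cols B)" and li: "lin_indpt S" using max unfolding maximal_def by auto
  have Bc: "set (cols B) \<subseteq> carrier_vec n" using B cols_dim by blast
  have Sc: "S \<subseteq> carrier_vec n" using SB Bc by auto
  have fin: "finite S" using SB finite_subset by blast
  have colsp: "set (cols B) \<subseteq> span S"
  proof
    fix v assume v: "v \<in> set (cols B)"
    show "v \<in> span S"
    proof (cases "v \<in> S")
      case True then show ?thesis using Sc by (simp add: span_mem)
    next
      case False
      show ?thesis
      proof (rule ccontr)
        assume ns: "v \<notin> span S"
        have vc: "v \<in> carrier V" using v Bc by auto
        have "lin_indpt (S \<union> {v})" using lin_dep_iff_in_span[OF Sc li _ False] vc ns by auto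
        moreover have "S \<union> {v} \<subseteq> set (cols B)" using SB v by auto
        ultimately have "S \<union> {v} = S" using max unfolding maximal_def by blast
        then show False using False by auto
      qed
    qed
  qed
  obtain us where us: "set us = S" "distinct us" using finite_distinct_list[OF fin] by blast
  have len: "length us = rank B" using us rk distinct_card by fastforce
  have usc: "set us \<subseteq> carrier_vec n" using us Sc by auto
  have "\<forall>q<nc. \<exists>c. col B q = lincomb_list c us"
  proof (intro allI impI)
    fix q assume q: "q < nc"
    have "col B q \<in> set (cols B)" using q B by (metis cols_length cols_nth carrier_matD(2) nth_mem)
    then have "col B q \<in> span_list us" using colsp span_list_as_span[OF usc] us by auto
    then show "\<exists>c. col B q = lincomb_list c us" by (auto simp: span_list_def)
  qed
  then obtain cf where cf: "\<And>q. q < nc \<Longrightarrow> col B q = lincomb_list (cf q) us" by metis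
  define U where "U = mat_of_cols n us"
  define W where "W = mat (rank B) nc (\<lambda>(i,q). cf q i)"
  have U: "U \<in> carrier_mat n (rank B)" unfolding U_def using len by auto
  have W: "W \<in> carrier_mat (rank B) nc" unfolding W_def by auto
  have "B = U * W"
  proof (rule eq_matI)
    fix p q assume p: "p < dim_row (U * W)" and q: "q < dim_col (U * W)"
    have pn: "p < n" and qn: "q < nc" using p q U W by auto
    have cw: "col W q = vec (length us) (cf q)" using qn len unfolding W_def by (intro eq_vecI) auto
    have "(U * W) $$ (p, q) = (U *\<^sub>v col W q) $ p" using pn qn U W by (simp add: col_mult2)
    also have "U *\<^sub>v col W q = lincomb_list (cf q) us"
      unfolding cw U_def by (rule lincomb_list_as_mat_mult[symmetric], insert usc, auto)
    also have "\<dots> = col B q" using cf qn by simp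
    finally show "B $$ (p, q) = (U * W) $$ (p, q)" using pn qn B by simp
  qed (insert U W B, auto)
  then show ?thesis using U W by blast
qed

lemma span_sub:
  assumes G: "nc_graph n S" and AS: "A \<subseteq> S"
  shows "mat_span n A \<subseteq> S"
proof
  fix X assume "X \<in> mat_span n A"
  then have "\<exists>N c M. (\<forall>j<N. M j \<in> A) \<and> X = mat n n (\<lambda>ab. \<Sum>j<N. (c::nat\<Rightarrow>complex) j * M j $$ ab)"
    unfolding mat_span_def by simp
  then obtain N :: nat and c :: "nat \<Rightarrow> complex" and M :: "nat \<Rightarrow> complex mat" where M: "\<forall>j<N. M j \<in> A" and X: "X = mat n n (\<lambda>ab. \<Sum>j<N. c j * M j $$ ab)"
    by blast
  have Sc: "S \<subseteq> carrier_mat n n" using G unfolding nc_graph_def by auto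
  have "\<forall>j<N. M j \<in> A \<Longrightarrow> mat n n (\<lambda>ab. \<Sum>j<N. c j * M j $$ ab) \<in> S" for N
  proof (induction N)
    case 0
    have "mat n n (\<lambda>ab. \<Sum>j<0. c j * M j $$ ab) = 0\<^sub>m n n" by (intro eq_matI) auto
    then show ?case using G unfolding nc_graph_def by simp
  next
    case (Suc N)
    have MN: "M N \<in> S" "M N \<in> carrier_mat n n" using Suc.prems AS Sc by auto
    have "mat n n (\<lambda>ab. \<Sum>j<Suc N. c j * M j $$ ab) = mat n n (\<lambda>ab. \<Sum>j<N. c j * M j $$ ab) + c N \<cdot>\<^sub>m M N"
      using MN by (intro eq_matI) auto
    moreover have "mat n n (\<lambda>ab. \<Sum>j<N. c j * M j $$ ab) \<in> S" using Suc by auto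
    moreover have "c N \<cdot>\<^sub>m M N \<in> S" using G MN unfolding nc_graph_def by auto
    ultimately show ?case using G unfolding nc_graph_def by auto
  qed
  then show "X \<in> S" using M X by auto
qed

lemma in_span:
  assumes "X \<in> A" "A \<subseteq> carrier_mat n n"
  shows "X \<in> mat_span n A"
proof -
  have "X = mat n n (\<lambda>ab. \<Sum>j<(1::nat). (\<lambda>_. 1) j * (\<lambda>_. X) j $$ ab)" using assms by (intro eq_matI) auto
  then show ?thesis unfolding mat_span_def using assms(1) by (intro CollectI exI[of _ 1] exI[of _ "\<lambda>_. 1"] exI[of _ "\<lambda>_. X"]) auto
qed

lemma idx_lt: "i < (m::nat) \<Longrightarrow> a < n \<Longrightarrow> i * n + a < m * n"
proof -
  assume "i < m" "a < n"
  then have "i * n + a < (i + 1) * n" by simp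
  also have "\<dots> \<le> m * n" using \<open>i < m\<close> by (intro mult_le_mono1) simp
  finally show ?thesis .
qed

lemma msum_cong: "(\<And>i. i < m \<Longrightarrow> f i = g i) \<Longrightarrow> msum r c f m = msum r c g m"
  unfolding msum_def by (intro eq_matI) auto

lemma haem_to_EF:
  assumes G: "nc_graph n S" and B: "B \<in> carrier_mat (m*n) (m*n)"
    and bl: "\<forall>i<m. \<forall>j<m. blk n B i j \<in> S"
    and sm: "msum n n (\<lambda>i. blk n B i i) m = 1\<^sub>m n"
    and rr: "vec_space.rank (m*n) B = r"
  shows "\<exists>m (E :: nat \<Rightarrow> complex mat) (F :: nat \<Rightarrow> complex mat).
            (\<forall>i<m. E i \<in> carrier_mat r n \<and> F i \<in> carrier_mat r n)
          \<and> msum n n (\<lambda>i. mat_adjoint (F i) * E i) m = 1\<^sub>m n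
          \<and> mat_span n {mat_adjoint (F i) * E j | i j. i < m \<and> j < m} \<subseteq> S"
proof -
  interpret vec_space "TYPE(complex)" "m*n" .
  have r_def: "r = rank B" using rr by simp
  obtain U W where U: "U \<in> carrier_mat (m*n) r" and W: "W \<in> carrier_mat r (m*n)" and BUW: "B = U * W"
    using rank_factor[OF B] unfolding r_def by blast
  define E where "E = (\<lambda>j. mat r n (\<lambda>(a,b). W $$ (a, j*n+b)))"
  define F where "F = (\<lambda>i. mat r n (\<lambda>(a,b). conjugate (U $$ (i*n+b, a))))"
  have key: "mat_adjoint (F i) * E j = blk n B i j" if ij: "i < m" "j < m" for i j
  proof (rule eq_matI)
    fix a b assume a: "a < dim_row (blk n B i j)" and b: "b < dim_col (blk n B i j)"
    have an: "a < n" and bn: "b < n" using a b by (auto simp: blk_def)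
    have p: "i*n+a < m*n" and q: "j*n+b < m*n" using idx_lt ij an bn by auto
    have "(mat_adjoint (F i) * E j) $$ (a,b) = (\<Sum>c<r. U $$ (i*n+a, c) * W $$ (c, j*n+b))"
      using an bn unfolding E_def F_def
      by (simp add: scalar_prod_def lessThan_atLeast0 row_def col_def)
    also have "\<dots> = B $$ (i*n+a, j*n+b)" unfolding BUW using p q U W
      by (simp add: scalar_prod_def lessThan_atLeast0)
    finally show "(mat_adjoint (F i) * E j) $$ (a, b) = blk n B i j $$ (a, b)"
      using an bn by (simp add: blk_def)
  qed (auto simp: blk_def E_def F_def)
  have c1: "\<forall>i<m. E i \<in> carrier_mat r n \<and> F i \<in> carrier_mat r n" unfolding E_def F_def by auto
  have c2: "msum n n (\<lambda>i. mat_adjoint (F i) * E i) m = 1\<^sub>m n"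
    using sm msum_cong[of m "\<lambda>i. mat_adjoint (F i) * E i" "\<lambda>i. blk n B i i"] key by simp
  have "{mat_adjoint (F i) * E j | i j. i < m \<and> j < m} \<subseteq> S" using key bl by auto
  then have c3: "mat_span n {mat_adjoint (F i) * E j | i j. i < m \<and> j < m} \<subseteq> S"
    using span_sub[OF G] by blast
  show ?thesis using c1 c2 c3 unfolding r_def by blast
qed



lemma EF_to_haem:
  assumes G: "nc_graph n S"
    and EF: "\<forall>i<m. E i \<in> carrier_mat k n \<and> F i \<in> carrier_mat k n"
    and sm: "msum n n (\<lambda>i. mat_adjoint (F i) * E i) m = 1\<^sub>m n"
    and sp: "mat_span n {mat_adjoint (F i) * E j | i j. i < m \<and> j < m} \<subseteq> S"
  shows "\<exists>B. B \<in> carrier_mat (m*n) (m*n)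
       \<and> (\<forall>i<m. \<forall>j<m. blk n B i j \<in> S)
       \<and> msum n n (\<lambda>i. blk n B i i) m = 1\<^sub>m n
       \<and> vec_space.rank (m*n) B \<le> k"
proof -
  interpret vec_space "TYPE(complex)" "m*n" .
  define B where "B = mat (m*n) (m*n) (\<lambda>(p,q). (mat_adjoint (F (p div n)) * E (q div n)) $$ (p mod n, q mod n))"
  have dm: "(i*n+a) div n = i" "(i*n+a) mod n = a" if "a < n" for i a :: nat using that by auto
  have key: "blk n B i j = mat_adjoint (F i) * E j" if ij: "i < m" "j < m" for i j
  proof (rule eq_matI)
    fix a b assume a: "a < dim_row (mat_adjoint (F i) * E j)" and b: "b < dim_col (mat_adjoint (F i) * E j)"
    have an: "a < n" and bn: "b < n" using a b EF ij by auto
    have p: "i*n+a < m*n" and q: "j*n+b < m*n" using idx_lt ij an bn by auto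
    show "blk n B i j $$ (a, b) = (mat_adjoint (F i) * E j) $$ (a, b)"
    proof -
      have "blk n B i j $$ (a, b) = B $$ (i*n+a, j*n+b)" using an bn unfolding blk_def by simp
      also have "\<dots> = (mat_adjoint (F ((i*n+a) div n)) * E ((j*n+b) div n)) $$ ((i*n+a) mod n, (j*n+b) mod n)"
        using p q unfolding B_def by (simp only: index_mat split)
      also have "\<dots> = (mat_adjoint (F i) * E j) $$ (a, b)" by (simp only: dm[OF an] dm[OF bn])
      finally show ?thesis .
    qed
  qed (insert EF ij, auto simp: blk_def)
  have adjc: "mat_adjoint A \<in> carrier_mat n k" if "A \<in> carrier_mat k n" for A :: "complex mat"
    using carrier_matD[OF that] by (intro carrier_matI) simp_all
  have Sc: "{mat_adjoint (F i) * E j | i j. i < m \<and> j < m} \<subseteq> carrier_mat n n"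
  proof
    fix X assume "X \<in> {mat_adjoint (F i) * E j | i j. i < m \<and> j < m}"
    then obtain i j where X: "X = mat_adjoint (F i) * E j" "i < m" "j < m" by blast
    show "X \<in> carrier_mat n n" unfolding X(1) using EF X(2,3) adjc by (meson mult_carrier_mat)
  qed
  have c2: "\<forall>i<m. \<forall>j<m. blk n B i j \<in> S"
  proof (intro allI impI)
    fix i j assume ij: "i < m" "j < m"
    have "mat_adjoint (F i) * E j \<in> mat_span n {mat_adjoint (F i) * E j | i j. i < m \<and> j < m}"
      by (rule Submission.in_span[OF _ Sc], insert ij, blast)
    then show "blk n B i j \<in> S" using key[OF ij] sp by auto
  qed
  have c3: "msum n n (\<lambda>i. blk n B i i) m = 1\<^sub>m n"
    using sm msum_cong[of m "\<lambda>i. blk n B i i" "\<lambda>i. mat_adjoint (F i) * E i"] key by simp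
  define U where "U = mat (m*n) k (\<lambda>(p,c). mat_adjoint (F (p div n)) $$ (p mod n, c))"
  define W where "W = mat k (m*n) (\<lambda>(c,q). E (q div n) $$ (c, q mod n))"
  have BUW: "B = U * W"
  proof (rule eq_matI)
    fix p q assume p: "p < dim_row (U * W)" and q: "q < dim_col (U * W)"
    have pm: "p < m*n" and qm: "q < m*n" using p q unfolding U_def W_def by auto
    have n0: "0 < n" using pm by (cases n) auto
    have pd: "p div n < m" and qd: "q div n < m" using pm qm less_mult_imp_div_less by auto
    have pn: "p mod n < n" and qn: "q mod n < n" using n0 by auto
    have Fi: "F (p div n) \<in> carrier_mat k n" and Ej: "E (q div n) \<in> carrier_mat k n" using EF pd qd by auto
    have "(U * W) $$ (p, q) = (\<Sum>c\<in>{0..<k}. U $$ (p,c) * W $$ (c,q))"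
      using pm qm by (simp add: U_def W_def scalar_prod_def)
    also have "\<dots> = (\<Sum>c\<in>{0..<k}. mat_adjoint (F (p div n)) $$ (p mod n, c) * E (q div n) $$ (c, q mod n))"
      using pm qm by (intro sum.cong refl) (simp add: U_def W_def)
    also have "\<dots> = (mat_adjoint (F (p div n)) * E (q div n)) $$ (p mod n, q mod n)"
      using Fi Ej pn qn by (simp add: scalar_prod_def)
    also have "\<dots> = B $$ (p, q)" using pm qm by (simp add: B_def)
    finally show "B $$ (p, q) = (U * W) $$ (p, q)" by simp
  qed (auto simp: B_def U_def W_def)
  have "rank B \<le> k" unfolding BUW by (rule rank_mult_le, auto simp: U_def W_def)
  moreover have "B \<in> carrier_mat (m*n) (m*n)" unfolding B_def by auto
  ultimately show ?thesis using c2 c3 by blast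
qed


lemma ex_le_imp_ex: "\<exists>r\<le>(k::nat). P r \<Longrightarrow> \<exists>r. P r" by blast
lemma ex_le_Least: "\<exists>r\<le>(k::nat). P r \<Longrightarrow> (LEAST r. P r) \<le> k" by (metis Least_le le_trans)

theorem mainTheorem6:
  fixes n :: nat and S :: "complex mat set"
  assumes "nc_graph n S"
  shows "haemers n S = (LEAST k. \<exists>m (E :: nat \<Rightarrow> complex mat) (F :: nat \<Rightarrow> complex mat).
            (\<forall>i<m. E i \<in> carrier_mat k n \<and> F i \<in> carrier_mat k n)
          \<and> msum n n (\<lambda>i. mat_adjoint (F i) * E i) m = 1\<^sub>m n
          \<and> mat_span n {mat_adjoint (F i) * E j | i j. i < m \<and> j < m} \<subseteq> S)"
    (is "_ = (LEAST k. ?P k)")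
proof -
  let ?Q = "\<lambda>r. \<exists>m B. B \<in> carrier_mat (m*n) (m*n)
       \<and> (\<forall>i<m. \<forall>j<m. blk n B i j \<in> S)
       \<and> msum n n (\<lambda>i. blk n B i i) m = 1\<^sub>m n
       \<and> vec_space.rank (m*n) B = r"
  have h: "haemers n S = (LEAST r. ?Q r)" unfolding haemers_def by simp
  have A: "\<And>k. ?P k \<Longrightarrow> \<exists>r\<le>k. ?Q r"
  proof (elim exE conjE)
    fix k m E F
    assume EF: "\<forall>i<m. E i \<in> carrier_mat k n \<and> F i \<in> carrier_mat k n"
      and sm: "msum n n (\<lambda>i. mat_adjoint (F i) * E i) m = 1\<^sub>m n"
      and sp: "mat_span n {mat_adjoint (F i) * E j | i j. i < m \<and> j < m} \<subseteq> S"
    from EF_to_haem[OF assms EF sm sp] obtain B where B: "B \<in> carrier_mat (m*n) (m*n)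
       \<and> (\<forall>i<m. \<forall>j<m. blk n B i j \<in> S)
       \<and> msum n n (\<lambda>i. blk n B i i) m = 1\<^sub>m n
       \<and> vec_space.rank (m*n) B \<le> k" by (rule exE)
    note B1 = conjunct1[OF B] and B2 = conjunct1[OF conjunct2[OF B]]
      and B3 = conjunct1[OF conjunct2[OF conjunct2[OF B]]] and B4 = conjunct2[OF conjunct2[OF conjunct2[OF B]]]
    have Q: "?Q (vec_space.rank (m*n) B)"
      by (rule exI[of _ m], rule exI[of _ B], intro conjI B1 B2 B3 refl)
    show "\<exists>r\<le>k. ?Q r" by (rule exI[of _ "vec_space.rank (m*n) B"], rule conjI[OF B4 Q])
  qed
  have Bd: "\<And>r. ?Q r \<Longrightarrow> ?P r"
  proof (elim exE conjE)
    fix r m B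
    assume "B \<in> carrier_mat (m*n) (m*n)" "\<forall>i<m. \<forall>j<m. blk n B i j \<in> S"
       "msum n n (\<lambda>i. blk n B i i) m = 1\<^sub>m n" "vec_space.rank (m*n) B = r"
    then show "?P r" by (rule haem_to_EF[OF assms])
  qed
  have Pn: "?P n"
  proof -
    have o: "mat_adjoint (1\<^sub>m n :: complex mat) * 1\<^sub>m n = 1\<^sub>m n"
    proof -
      have "mat_adjoint (1\<^sub>m n :: complex mat) = 1\<^sub>m n" by (intro eq_matI) auto
      then show ?thesis by simp
    qed
    have m1: "msum n n (\<lambda>i. mat_adjoint ((\<lambda>_. 1\<^sub>m n) i) * (\<lambda>_. 1\<^sub>m n) i) 1 = (1\<^sub>m n :: complex mat)"
      unfolding o msum_def by (intro eq_matI) auto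
    have "{mat_adjoint ((\<lambda>_. 1\<^sub>m n :: complex mat) i) * (\<lambda>_. 1\<^sub>m n) j | i j. i < (1::nat) \<and> j < 1} \<subseteq> S"
      using assms unfolding o nc_graph_def by auto
    then have "mat_span n {mat_adjoint ((\<lambda>_. 1\<^sub>m n :: complex mat) i) * (\<lambda>_. 1\<^sub>m n) j | i j. i < (1::nat) \<and> j < 1} \<subseteq> S"
      using span_sub[OF assms] by blast
    note sp = this
    have c1: "\<forall>i<(1::nat). (\<lambda>_. 1\<^sub>m n :: complex mat) i \<in> carrier_mat n n \<and> (\<lambda>_. 1\<^sub>m n :: complex mat) i \<in> carrier_mat n n" by simp
    show ?thesis by (rule exI[of _ 1], rule exI[of _ "\<lambda>_. 1\<^sub>m n"], rule exI[of _ "\<lambda>_. 1\<^sub>m n"], intro conjI c1 m1 sp)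
  qed
  have Qex: "\<exists>r. ?Q r" by (rule ex_le_imp_ex[OF A[OF Pn]])
  have P1: "?P (LEAST k. ?P k)" by (rule LeastI[of ?P n, OF Pn])
  have AP1: "\<exists>r\<le>(LEAST k. ?P k). ?Q r" by (rule A[OF P1])
  have le1: "(LEAST r. ?Q r) \<le> (LEAST k. ?P k)" using AP1 by (rule ex_le_Least)
  have Q1: "?Q (LEAST r. ?Q r)" by (rule LeastI_ex[OF Qex])
  have P2: "?P (LEAST r. ?Q r)" by (rule Bd[OF Q1])
  have le2: "(LEAST k. ?P k) \<le> (LEAST r. ?Q r)" by (rule Least_le[of ?P, OF P2])
  have eq: "(LEAST r. ?Q r) = (LEAST k. ?P k)" by (rule antisym[OF le1 le2])
  from h eq show ?thesis by (rule trans)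
qed

end
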